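(* Let $G=(V,E)$ be a connected graph which is either finite or infinite with bounded degrees, let $n=|V|\in\mathbb N\cup\{\infty\}$, let $o\in V$ and let $(m_t)_{t\ge0}$ be the fragmentation process originating at $o$. Let $t>0$ and suppose that $Q_t\ge 2/n$ (this holds automatically if $V$ is infinite, interpreting $2/n=0$). Then $\mathcal{E}_t\ge Q_t^3/8$.
   Context: Fragmentation process originating at $o$: $m_t:V\to[0,1]$, with $m_0(o)=1$ and $m_0(v)=0$ for $v\neq o$. Each edge carries an independent rate-one Poisson clock; when the clock of edge $\{u,v\}$ rings at time $t$, set $m_t(u)=m_t(v)=\frac{m_{t-}(u)+m_{t-}(v)}{2}$ (with $m_{t-}(u)=\lim_{s\uparrow t}m_s(u)$), other values unchanged. Define $Q_t:=\sum_{v\in V}m_t(v)^2$ and $\mathcal E_t:=\sum_{\{u,v\}\in E}(m_t(u)-m_t(v))^2$. *)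

theory Defs
  imports "HOL-Analysis.Analysis"
begin

text \<open>Graphs: vertex set is the whole type 'a, adjacency a symmetric irreflexive relation.\<close>

definition simple_graph :: "('a \<Rightarrow> 'a \<Rightarrow> bool) \<Rightarrow> bool" where
  "simple_graph adj \<longleftrightarrow> (\<forall>u v. adj u v \<longrightarrow> adj v u) \<and> (\<forall>v. \<not> adj v v)"

definition connected_graph :: "('a \<Rightarrow> 'a \<Rightarrow> bool) \<Rightarrow> bool" where
  "connected_graph adj \<longleftrightarrow> (\<forall>u v. adj\<^sup>*\<^sup>* u v)"

definition bounded_degree :: "('a \<Rightarrow> 'a \<Rightarrow> bool) \<Rightarrow> bool" where
  "bounded_degree adj \<longleftrightarrow> (\<exists>D::nat. \<forall>v. finite {u. adj v u} \<and> card {u. adj v u} \<le> D)"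

definition frag_step :: "('a \<Rightarrow> real) \<Rightarrow> 'a \<times> 'a \<Rightarrow> ('a \<Rightarrow> real)" where
  "frag_step m e = (case e of (u, v) \<Rightarrow>
      m(u := (m u + m v) / 2, v := (m u + m v) / 2))"

text \<open>Configuration of the fragmentation process started at r after the sequence of
  clock rings es (listed in chronological order).\<close>
definition frag_config :: "'a \<Rightarrow> ('a \<times> 'a) list \<Rightarrow> ('a \<Rightarrow> real)" where
  "frag_config r es = foldl frag_step (\<lambda>v. if v = r then 1 else 0) es"

definition Qsum :: "('a \<Rightarrow> real) \<Rightarrow> real" where
  "Qsum m = (\<Sum>\<^sub>\<infinity> v. (m v)\<^sup>2)"

text \<open>Sum over unordered edges = half the sum over ordered adjacent pairs.\<close>
definition Esum :: "('a \<Rightarrow> 'a \<Rightarrow> bool) \<Rightarrow> ('a \<Rightarrow> real) \<Rightarrow> real" where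
  "Esum adj m = (\<Sum>\<^sub>\<infinity> (u, v) \<in> {(u, v). adj u v}. (m u - m v)\<^sup>2) / 2"

end

theory Submission
  imports Defs
begin

lemma frag_config_snoc: "frag_config r (es @ [e]) = frag_step (frag_config r es) e"
  by (simp add: frag_config_def)

lemma step_sum:
  assumes "finite S" "u \<in> S" "v \<in> S"
  shows "sum (frag_step m (u,v)) S = sum m S"
proof (cases "u = v")
  case True
  then have "frag_step m (u,v) = m" by (auto simp: frag_step_def)
  then show ?thesis by simp
next
  case False
  have gen: "sum f S = f u + f v + sum f (S - {u} - {v})" for f :: "'a \<Rightarrow> real"
    using assms False by (simp add: sum.remove[of S u] sum.remove[of "S - {u}" v])
  have eq: "sum (frag_step m (u,v)) (S - {u} - {v}) = sum m (S - {u} - {v})"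
    by (rule sum.cong) (auto simp: frag_step_def)
  show ?thesis
    using False by (simp add: gen[of "frag_step m (u,v)"] gen[of m] eq) (simp add: frag_step_def)
qed

lemma frag_step_nonneg:
  assumes "\<forall>v. m v \<ge> (0::real)" shows "\<forall>v. frag_step m e v \<ge> 0"
  using assms by (auto simp: frag_step_def split: prod.splits)

lemma frag_step_zero:
  assumes "\<forall>v. v \<notin> S \<longrightarrow> m v = 0"
  shows "\<forall>v. v \<notin> S \<union> {fst e, snd e} \<longrightarrow> frag_step m e v = 0"
  using assms by (auto simp: frag_step_def split: prod.splits)

lemma frag_inv:
  "\<exists>S. finite S \<and> (\<forall>v. v \<notin> S \<longrightarrow> frag_config r es v = 0) \<and> sum (frag_config r es) S = 1
     \<and> (\<forall>v. frag_config r es v \<ge> 0)"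
proof (induction es rule: rev_induct)
  case Nil
  show ?case by (rule exI[of _ "{r}"]) (auto simp: frag_config_def)
next
  case (snoc e es)
  then obtain S where S: "finite S" "\<forall>v. v \<notin> S \<longrightarrow> frag_config r es v = 0"
    "sum (frag_config r es) S = 1" "\<forall>v. frag_config r es v \<ge> 0" by blast
  obtain u v where e: "e = (u,v)" by fastforce
  define S' where "S' = S \<union> {u, v}"
  have "sum (frag_config r es) S' = sum (frag_config r es) S"
    unfolding S'_def using S by (intro sum.mono_neutral_right) auto
  moreover have "sum (frag_step (frag_config r es) (u,v)) S' = sum (frag_config r es) S'"
    using S by (intro step_sum) (auto simp: S'_def)
  ultimately show ?case
    using S frag_step_nonneg[of "frag_config r es" e] frag_step_zero[of S "frag_config r es" e]
    by (intro exI[of _ S']) (auto simp: frag_config_snoc e S'_def)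
qed

lemma walk_exists:
  assumes "adj\<^sup>*\<^sup>* x y"
  shows "\<exists>L p. p 0 = x \<and> p L = y \<and> (\<forall>i<L. adj (p i) (p (Suc i)))"
  using assms
proof (induction rule: rtranclp_induct)
  case base
  show ?case by (rule exI[of _ 0], rule exI[of _ "\<lambda>_. x"]) auto
next
  case (step y z)
  then obtain L p where p: "p 0 = x" "p L = y" "\<forall>i<L. adj (p i) (p (Suc i))" by blast
  show ?case
    apply (rule exI[of _ "Suc L"], rule exI[of _ "p(Suc L := z)"])
    using p step(2) by (auto simp: less_Suc_eq)
qed

lemma shortest_walk:
  assumes "\<exists>L p. p 0 = x \<and> p L \<in> T \<and> (\<forall>i<L. adj (p i) (p (Suc i)))"
  shows "\<exists>L p. p 0 = x \<and> p L \<in> T \<and> (\<forall>i<L. adj (p i) (p (Suc i)))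
          \<and> (\<forall>i<L. p i \<notin> T) \<and> inj_on p {..L}"
proof -
  define P where "P L \<longleftrightarrow> (\<exists>p. p 0 = x \<and> p L \<in> T \<and> (\<forall>i<L. adj (p i) (p (Suc i))))" for L
  have "\<exists>L. P L" using assms by (auto simp: P_def)
  define L where "L = (LEAST L. P L)"
  have PL: "P L" unfolding L_def using \<open>\<exists>L. P L\<close> by (metis LeastI)
  have minL: "\<And>L'. P L' \<Longrightarrow> L \<le> L'" unfolding L_def by (rule Least_le)
  obtain p where p: "p 0 = x" "p L \<in> T" "\<forall>i<L. adj (p i) (p (Suc i))" using PL by (auto simp: P_def)
  have notT: "\<forall>i<L. p i \<notin> T"
  proof (intro allI impI)
    fix i assume "i < L"
    show "p i \<notin> T"
    proof
      assume "p i \<in> T"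
      then have "P i" unfolding P_def using p \<open>i < L\<close> by (intro exI[of _ p]) auto
      then show False using minL \<open>i < L\<close> by force
    qed
  qed
  have inj: "inj_on p {..L}"
  proof (rule ccontr)
    assume "\<not> inj_on p {..L}"
    then obtain a b where ab: "a \<le> L" "b \<le> L" "p a = p b" "a \<noteq> b"
      by (auto simp: inj_on_def)
    define i where "i = min a b"
    define j where "j = max a b"
    have ij: "i < j" "j \<le> L" "p i = p j"
      using ab by (auto simp: i_def j_def min_def max_def)
    define q where "q k = (if k < i then p k else p (k + (j - i)))" for k
    have "P (L - (j - i))"
      unfolding P_def
    proof (intro exI[of _ q] conjI allI impI)
      show "q 0 = x" using ij p by (auto simp: q_def)
      show "q (L - (j - i)) \<in> T" using ij p by (auto simp: q_def)
      fix k assume k: "k < L - (j - i)"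
      show "adj (q k) (q (Suc k))"
      proof (cases "Suc k < i")
        case True then show ?thesis using p k ij by (auto simp: q_def)
      next
        case False
        show ?thesis
        proof (cases "Suc k = i")
          case True
          then have "q k = p k" "q (Suc k) = p (Suc k)" using ij by (auto simp: q_def)
          then show ?thesis using p k ij by auto
        next
          case False
          then have "q k = p (k + (j - i))" "q (Suc k) = p (Suc (k + (j - i)))"
            using \<open>\<not> Suc k < i\<close> by (auto simp: q_def)
          then show ?thesis using p k ij by auto
        qed
      qed
    qed
    from minL[OF this] ij show False by arith
  qed
  show ?thesis using p notT inj by blast
qed

theorem lemma2p1:
  fixes adj :: "'a \<Rightarrow> 'a \<Rightarrow> bool" and r :: 'a and es :: "('a \<times> 'a) list"
  assumes "simple_graph adj"
    and "connected_graph adj"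
    and "finite (UNIV :: 'a set) \<or> bounded_degree adj"
    and "\<forall>(u, v) \<in> set es. adj u v"
    and "finite (UNIV :: 'a set) \<longrightarrow> Qsum (frag_config r es) \<ge> 2 / real (card (UNIV :: 'a set))"
  shows "Esum adj (frag_config r es) \<ge> (Qsum (frag_config r es)) ^ 3 / 8"
proof -
  define m where "m = frag_config r es"
  obtain S where S: "finite S" "\<And>v. v \<notin> S \<Longrightarrow> m v = 0" "sum m S = 1" "\<And>v. m v \<ge> 0"
    using frag_inv[of r es] unfolding m_def by blast
  have Sne: "S \<noteq> {}" using S(3) by auto
  define M where "M = Max (m ` S)"
  obtain vs where vs: "vs \<in> S" "m vs = M"
    unfolding M_def using Sne S(1) by (metis (no_types, lifting) Max_in finite_imageI image_iff image_is_empty)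
  have M0: "M \<ge> 0" using vs S(4) by metis
  have leM: "m v \<le> M" for v
  proof (cases "v \<in> S")
    case True then show ?thesis unfolding M_def using S(1) by simp
  next
    case False then show ?thesis using S(2) M0 by simp
  qed
  have "1 \<le> sum (\<lambda>_. M) S" using S(3) leM by (metis sum_mono)
  then have "1 \<le> real (card S) * M" by simp
  then have Mpos: "M > 0" using M0 by (cases "M = 0") auto
  have Qeq: "Qsum m = (\<Sum>v\<in>S. (m v)^2)"
    unfolding Qsum_def
    by (subst infsum_cong_neutral[where T=S and g="\<lambda>v. (m v)^2"]) (use S in auto)
  have QleM: "Qsum m \<le> M"
  proof -
    have "(\<Sum>v\<in>S. (m v)^2) \<le> (\<Sum>v\<in>S. M * m v)"
      by (intro sum_mono) (use S(4) leM in \<open>auto simp: power2_eq_square intro: mult_right_mono\<close>)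
    also have "\<dots> = M" using S(3) by (simp flip: sum_distrib_left)
    finally show ?thesis using Qeq by simp
  qed
  have Qpos: "Qsum m > 0"
  proof -
    have "\<exists>v\<in>S. m v \<noteq> 0" using S(3) by (metis sum.neutral zero_neq_one)
    then obtain v where "v \<in> S" "m v \<noteq> 0" by blast
    then have "(\<Sum>v\<in>S. (m v)^2) > 0" using S(1) by (intro sum_pos2[of S v]) auto
    then show ?thesis using Qeq by simp
  qed
  define H where "H = {v. m v > M / 2}"
  have HS: "H \<subseteq> S" unfolding H_def using S(2) Mpos by force
  have finH: "finite H" using HS S(1) finite_subset by blast
  have vsH: "vs \<in> H" unfolding H_def using vs Mpos by simp
  have "real (card H) * (M / 2) = (\<Sum>v\<in>H. M / 2)" by simp
  also have "\<dots> < (\<Sum>v\<in>H. m v)"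
    using finH vsH by (intro sum_strict_mono) (auto simp: H_def)
  also have "\<dots> \<le> sum m S" using HS S(1) S(4) by (intro sum_mono2) auto
  finally have kM: "real (card H) * M < 2" using S(3) by simp
  define T where "T = {v. m v \<le> M / 2}"
  have "\<exists>w. w \<in> T"
  proof (cases "finite (UNIV :: 'a set)")
    case True
    show ?thesis
    proof (rule ccontr)
      assume "\<not> ?thesis"
      then have "H = UNIV" unfolding H_def T_def by (auto simp: not_le)
      then have "real (card (UNIV :: 'a set)) * M < 2" using kM by simp
      moreover have "Qsum m \<ge> 2 / real (card (UNIV :: 'a set))" using assms(5) True m_def by simp
      moreover have "card (UNIV :: 'a set) > 0" using True by (simp add: finite_UNIV_card_ge_0)
      ultimately have "2 \<le> Qsum m * real (card (UNIV :: 'a set))"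
        by (simp add: divide_le_eq)
      moreover have "Qsum m * real (card (UNIV :: 'a set)) \<le> M * real (card (UNIV :: 'a set))"
        using QleM by (intro mult_right_mono) auto
      ultimately show False using \<open>real (card (UNIV :: 'a set)) * M < 2\<close> by (simp add: mult.commute)
    qed
  next
    case False
    then obtain w where "w \<notin> S" using S(1) by (metis UNIV_I finite_subset subsetI)
    then show ?thesis using S(2) M0 unfolding T_def by (intro exI[of _ w]) auto
  qed
  then obtain w where w: "w \<in> T" by blast
  have "adj\<^sup>*\<^sup>* vs w" using assms(2) by (simp add: connected_graph_def)
  then obtain L0 p0 where "p0 0 = vs" "p0 L0 = w" "\<forall>i<L0. adj (p0 i) (p0 (Suc i))"
    using walk_exists by metis
  then have "\<exists>L p. p 0 = vs \<and> p L \<in> T \<and> (\<forall>i<L. adj (p i) (p (Suc i)))" using w by blast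
  then obtain L p where p: "p 0 = vs" "p L \<in> T" "\<And>i. i < L \<Longrightarrow> adj (p i) (p (Suc i))"
     "\<And>i. i < L \<Longrightarrow> p i \<notin> T" "inj_on p {..L}"
    using shortest_walk[of vs T adj] by blast
  have "vs \<notin> T" using vsH unfolding H_def T_def by simp
  then have Lpos: "L > 0" using p(1,2) by (cases L) auto
  have "p ` {..<L} \<subseteq> H" using p(4) unfolding H_def T_def by (auto simp: not_le)
  moreover have "card (p ` {..<L}) = L"
    using p(5) by (subst card_image) (auto intro: inj_on_subset)
  ultimately have LH: "L \<le> card H" using finH by (metis card_mono)
  define d where "d i = m (p i) - m (p (Suc i))" for i
  have "(\<Sum>i<L. d i) = m (p 0) - m (p L)"
    unfolding d_def by (rule sum_lessThan_telescope')
  also have "\<dots> \<ge> M / 2" using p(1,2) vs unfolding T_def by simp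
  finally have sumd: "(\<Sum>i<L. d i) \<ge> M / 2" .
  have CS: "(\<Sum>i<L. d i)^2 \<le> (\<Sum>i<L. (d i)^2) * real L"
    using sum_squared_le_sum_of_squares[of d "{..<L}"] by simp
  have "(M / 2)^2 \<le> (\<Sum>i<L. d i)^2"
    using sumd Mpos by (intro power_mono) auto
  with CS have sq: "(M/2)^2 \<le> (\<Sum>i<L. (d i)^2) * real L" by linarith
  have key: "(\<Sum>i<L. (d i)^2) \<ge> M^3 / 8"
  proof -
    have "real L * M < 2" using kM LH Mpos
      by (meson le_less_trans mult_right_mono of_nat_le_iff less_imp_le)
    then have "M^3 / 8 * real L \<le> (M/2)^2"
      using Mpos by (simp add: power2_eq_square power3_eq_cube field_simps)
    with sq have "M^3 / 8 * real L \<le> (\<Sum>i<L. (d i)^2) * real L" by linarith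
    then show ?thesis using Lpos by simp
  qed
  define g where "g = (\<lambda>(u, v). (m u - m v)^2)"
  define A where "A = {(u, v). adj u v}"
  define P1 where "P1 = (\<lambda>i. (p i, p (Suc i))) ` {..<L}"
  define P2 where "P2 = (\<lambda>i. (p (Suc i), p i)) ` {..<L}"
  have sym: "adj u v \<Longrightarrow> adj v u" for u v using assms(1) by (simp add: simple_graph_def)
  have PA: "P1 \<union> P2 \<subseteq> A" unfolding P1_def P2_def A_def using p(3) sym by auto
  have injP: "p i = p j \<Longrightarrow> i \<le> L \<Longrightarrow> j \<le> L \<Longrightarrow> i = j" for i j
    using p(5) unfolding inj_on_def by auto
  have inj1: "inj_on (\<lambda>i. (p i, p (Suc i))) {..<L}"
    unfolding inj_on_def using injP by auto
  have inj2: "inj_on (\<lambda>i. (p (Suc i), p i)) {..<L}"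
    unfolding inj_on_def using injP by auto
  have disj: "P1 \<inter> P2 = {}"
  proof (rule ccontr)
    assume "P1 \<inter> P2 \<noteq> {}"
    then obtain i j where "i < L" "j < L" "p i = p (Suc j)" "p (Suc i) = p j"
      unfolding P1_def P2_def by auto
    then have "i = Suc j" "Suc i = j" using injP by auto
    then show False by simp
  qed
  have sumP: "sum g (P1 \<union> P2) = 2 * (\<Sum>i<L. (d i)^2)"
  proof -
    have "sum g (P1 \<union> P2) = sum g P1 + sum g P2"
      using disj unfolding P1_def P2_def by (intro sum.union_disjoint) auto
    also have "sum g P1 = (\<Sum>i<L. (d i)^2)"
      unfolding P1_def by (subst sum.reindex[OF inj1]) (simp add: g_def d_def)
    also have "sum g P2 = (\<Sum>i<L. (d i)^2)"
      unfolding P2_def by (subst sum.reindex[OF inj2]) (simp add: g_def d_def power2_commute)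
    finally show ?thesis by simp
  qed
  have summ: "g summable_on A"
  proof (rule finite_nonzero_values_imp_summable_on)
    show "finite {x \<in> A. g x \<noteq> 0}"
    proof (cases "finite (UNIV :: 'a set)")
      case True
      then have "finite (UNIV \<times> UNIV :: ('a \<times> 'a) set)" by (intro finite_cartesian_product)
      then show ?thesis by (rule finite_subset[rotated]) auto
    next
      case False
      with assms(3) obtain D :: nat where D: "\<And>v. finite {u. adj v u}"
        unfolding bounded_degree_def by blast
      have "{x \<in> A. g x \<noteq> 0} \<subseteq> (SIGMA u:S. {v. adj u v}) \<union> prod.swap ` (SIGMA u:S. {v. adj u v})"
      proof
        fix x assume x: "x \<in> {x \<in> A. g x \<noteq> 0}"
        obtain a b where ab: "x = (a, b)" by fastforce
        have "adj a b" "m a \<noteq> m b" using x ab unfolding A_def g_def by auto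
        then have "a \<in> S \<or> b \<in> S" using S(2) by metis
        then show "x \<in> (SIGMA u:S. {v. adj u v}) \<union> prod.swap ` (SIGMA u:S. {v. adj u v})"
          using ab \<open>adj a b\<close> sym by (auto intro!: image_eqI[of _ _ "(b, a)"])
      qed
      moreover have "finite (SIGMA u:S. {v. adj u v})" using S(1) D by (intro finite_SigmaI) auto
      ultimately show ?thesis by (meson finite_Un finite_imageI finite_subset)
    qed
  qed
  have finP: "finite (P1 \<union> P2)" unfolding P1_def P2_def by simp
  have "sum g (P1 \<union> P2) = infsum g (P1 \<union> P2)" using finP by simp
  also have "\<dots> \<le> infsum g A"
    using summ finP PA by (intro infsum_mono2) (auto simp: g_def)
  finally have "2 * (\<Sum>i<L. (d i)^2) \<le> infsum g A" using sumP by simp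
  then have E: "Esum adj m \<ge> (\<Sum>i<L. (d i)^2)"
    unfolding Esum_def A_def g_def by simp
  have "(Qsum m)^3 \<le> M^3" using QleM Qpos by (intro power_mono) auto
  then show ?thesis using E key unfolding m_def[symmetric] by simp
qed

end
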